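(* Let $\mathcal{S}\subseteq\mathcal{L}$, $\phi\in\mathcal{L}$, and let $\mathcal{AF}_{\vdash}=(\vdash,\overline{\cdot},\mathsf{id})$ be contrapositable with $\vdash$ satisfying Cut. If there is a $\Theta\subseteq\bigcap\mathsf{MCS}(\mathcal{AF}_{\vdash}(\mathcal{S}))$ with $\Theta\vdash\phi$, then $\bigcap\mathsf{MCS}(\mathcal{AF}_{\vdash}(\mathcal{S}))=\bigcap\mathsf{MCS}(\mathcal{AF}_{\vdash^{+\phi}}(\mathcal{S}))$.
   Context: $\mathcal{L}$ is a set of formulas; ${\vdash}\subseteq\wp_{\sf fin}(\mathcal{L})\times\mathcal{L}$ is arbitrary and $\overline{\cdot}:\mathcal{L}\to\wp(\mathcal{L})$. $\vdash^{+\phi}$ is the transitive closure of ${\vdash}\cup\{(\emptyset,\phi)\}$. Cut: for every $\phi$ and finite $\Gamma,\Delta$, if $\Gamma\vdash\phi$ and $\Delta\vdash^{+\phi}\gamma$ then $\Gamma\cup\Delta\vdash\gamma$. Contrapositable: for all finite $\Theta$, if $\Theta\vdash\gamma'$ with $\gamma'\in\overline{\gamma}$, then for every $\sigma\in\Theta$, $(\Theta\cup\{\gamma\})\setminus\{\sigma\}\vdash\sigma'$ for some $\sigma'\in\overline{\sigma}$. For a relation $\vdash'$ (here $\vdash$ or $\vdash^{+\phi}$), $\Theta\subseteq\mathcal{S}$ is $\mathcal{AF}_{\vdash'}(\mathcal{S})$-inconsistent iff there are $\Theta'\subseteq\Theta$ and $\gamma\in\Theta'$ with $\Theta'\setminus\{\gamma\}\vdash'\gamma'$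 for some $\gamma'\in\overline{\gamma}$, consistent otherwise; $\mathsf{MCS}(\mathcal{AF}_{\vdash'}(\mathcal{S}))$ is the set of maximal consistent subsets of $\mathcal{S}$ (consistent with no consistent proper superset within $\mathcal{S}$). *)

theory Defs
  imports Main
begin

(* A derivability relation  \<turnstile> \<subseteq> \<wp>_fin(L) \<times> L  is modelled as a predicate
   der :: 'a set \<Rightarrow> 'a \<Rightarrow> bool  together with the assumption that only finite
   premise sets occur (see fin_rel). *)

definition fin_rel :: "('a set \<Rightarrow> 'a \<Rightarrow> bool) \<Rightarrow> bool" where
  "fin_rel der \<longleftrightarrow> (\<forall>\<Gamma> \<psi>. der \<Gamma> \<psi> \<longrightarrow> finite \<Gamma>)"

inductive plus_der :: "('a set \<Rightarrow> 'a \<Rightarrow> bool) \<Rightarrow> 'a \<Rightarrow> 'a set \<Rightarrow> 'a \<Rightarrow> bool"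
  for der :: "'a set \<Rightarrow> 'a \<Rightarrow> bool" and \<phi> :: 'a where
  base: "der \<Gamma> \<psi> \<Longrightarrow> plus_der der \<phi> \<Gamma> \<psi>"
| ax: "plus_der der \<phi> {} \<phi>"
| trans: "plus_der der \<phi> \<Gamma> \<psi> \<Longrightarrow> plus_der der \<phi> \<Delta> \<gamma> \<Longrightarrow> \<psi> \<in> \<Delta> \<Longrightarrow>
           plus_der der \<phi> (\<Gamma> \<union> (\<Delta> - {\<psi>})) \<gamma>"

definition satisfies_cut :: "('a set \<Rightarrow> 'a \<Rightarrow> bool) \<Rightarrow> bool" where
  "satisfies_cut der \<longleftrightarrow>
     (\<forall>\<phi> \<Gamma> \<Delta> \<gamma>. finite \<Gamma> \<longrightarrow> finite \<Delta> \<longrightarrow> der \<Gamma> \<phi> \<longrightarrow> plus_der der \<phi> \<Delta> \<gamma> \<longrightarrow>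
        der (\<Gamma> \<union> \<Delta>) \<gamma>)"

definition contrapositable :: "('a set \<Rightarrow> 'a \<Rightarrow> bool) \<Rightarrow> ('a \<Rightarrow> 'a set) \<Rightarrow> bool" where
  "contrapositable der ctr \<longleftrightarrow>
     (\<forall>\<Theta> \<gamma> \<gamma>'. finite \<Theta> \<longrightarrow> der \<Theta> \<gamma>' \<longrightarrow> \<gamma>' \<in> ctr \<gamma> \<longrightarrow>
        (\<forall>\<sigma>\<in>\<Theta>. \<exists>\<sigma>'\<in>ctr \<sigma>. der ((\<Theta> \<union> {\<gamma>}) - {\<sigma>}) \<sigma>'))"

definition af_inconsistent :: "('a set \<Rightarrow> 'a \<Rightarrow> bool) \<Rightarrow> ('a \<Rightarrow> 'a set) \<Rightarrow> 'a set \<Rightarrow> bool" where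
  "af_inconsistent der ctr \<Theta> \<longleftrightarrow>
     (\<exists>\<Theta>' \<gamma> \<gamma>'. \<Theta>' \<subseteq> \<Theta> \<and> \<gamma> \<in> \<Theta>' \<and> \<gamma>' \<in> ctr \<gamma> \<and> der (\<Theta>' - {\<gamma>}) \<gamma>')"

abbreviation af_consistent :: "('a set \<Rightarrow> 'a \<Rightarrow> bool) \<Rightarrow> ('a \<Rightarrow> 'a set) \<Rightarrow> 'a set \<Rightarrow> bool" where
  "af_consistent der ctr \<Theta> \<equiv> \<not> af_inconsistent der ctr \<Theta>"

definition MCS :: "('a set \<Rightarrow> 'a \<Rightarrow> bool) \<Rightarrow> ('a \<Rightarrow> 'a set) \<Rightarrow> 'a set \<Rightarrow> 'a set set" where
  "MCS der ctr S = {\<Theta>. \<Theta> \<subseteq> S \<and> af_consistent der ctr \<Theta> \<and>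
      (\<forall>\<Theta>''. \<Theta> \<subset> \<Theta>'' \<and> \<Theta>'' \<subseteq> S \<longrightarrow> af_inconsistent der ctr \<Theta>'')}"

end

theory Submission
  imports Defs
begin

lemma plus_der_finite:
  assumes "fin_rel der" "plus_der der \<phi> \<Gamma> \<psi>" shows "finite \<Gamma>"
  using assms(2) by induction (use assms(1) in \<open>auto simp: fin_rel_def\<close>)

lemma incons_mono:
  assumes "af_inconsistent der ctr X" shows "af_inconsistent (plus_der der \<phi>) ctr X"
  using assms unfolding af_inconsistent_def by (blast intro: plus_der.base)

lemma incons_sub:
  assumes "af_inconsistent d ctr X" "X \<subseteq> Y" shows "af_inconsistent d ctr Y"
  using assms unfolding af_inconsistent_def by blast

lemma extend_MCS:
  assumes fr: "fin_rel der" and D: "D \<subseteq> S" "af_consistent der ctr D"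
  shows "\<exists>M\<in>MCS der ctr S. D \<subseteq> M"
proof -
  define A where "A = {X. D \<subseteq> X \<and> X \<subseteq> S \<and> af_consistent der ctr X}"
  have "A \<noteq> {}" using D unfolding A_def by blast
  moreover have "\<Union>C \<in> A" if C: "C \<noteq> {}" "subset.chain A C" for C
  proof -
    have CA: "C \<subseteq> A" using C(2) unfolding subset_chain_def by blast
    have "af_consistent der ctr (\<Union>C)"
    proof
      assume "af_inconsistent der ctr (\<Union>C)"
      then obtain T g g' where T: "T \<subseteq> \<Union>C" "g \<in> T" "g' \<in> ctr g" "der (T - {g}) g'"
        unfolding af_inconsistent_def by blast
      have "finite (T - {g})" using T(4) fr unfolding fin_rel_def by blast
      hence "finite T" by simp
      then obtain B where "B \<in> C" "T \<subseteq> B"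
        using finite_subset_Union_chain[OF _ T(1) C(1) C(2)] by blast
      hence "af_inconsistent der ctr B" using T unfolding af_inconsistent_def by blast
      thus False using CA \<open>B \<in> C\<close> unfolding A_def by blast
    qed
    thus ?thesis using CA C(1) unfolding A_def by blast
  qed
  ultimately obtain M where M: "M \<in> A" "\<forall>X\<in>A. M \<subseteq> X \<longrightarrow> X = M"
    using subset_Zorn_nonempty[of A] by blast
  have "M \<in> MCS der ctr S"
    unfolding MCS_def
  proof (intro CollectI conjI allI impI)
    show "M \<subseteq> S" "af_consistent der ctr M" using M(1) unfolding A_def by auto
    fix X assume X: "M \<subset> X \<and> X \<subseteq> S"
    show "af_inconsistent der ctr X"
    proof (rule ccontr)
      assume "af_consistent der ctr X"
      hence "X \<in> A" using X M(1) unfolding A_def by auto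
      thus False using M(2) X by blast
    qed
  qed
  thus ?thesis using M(1) unfolding A_def by blast
qed

lemma key:
  assumes fr: "fin_rel der" and cp: "contrapositable der ctr" and cut: "satisfies_cut der"
    and Th: "der Th \<phi>"
    and inc: "af_inconsistent (plus_der der \<phi>) ctr D"
  shows "af_inconsistent der ctr (D \<union> Th)"
proof -
  obtain T g g' where T: "T \<subseteq> D" "g \<in> T" "g' \<in> ctr g" "plus_der der \<phi> (T - {g}) g'"
    using inc unfolding af_inconsistent_def by blast
  have fT: "finite (T - {g})" using plus_der_finite[OF fr T(4)] .
  have fTh: "finite Th" using Th fr unfolding fin_rel_def by blast
  have d: "der (Th \<union> (T - {g})) g'" using cut fT fTh Th T(4) unfolding satisfies_cut_def by blast
  show ?thesis
  proof (cases "g \<in> Th")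
    case False
    have "(Th \<union> T) - {g} = Th \<union> (T - {g})" using False by blast
    hence "der ((Th \<union> T) - {g}) g'" using d by simp
    thus ?thesis using T unfolding af_inconsistent_def
      by (intro exI[of _ "Th \<union> T"] exI[of _ g] exI[of _ g']) auto
  next
    case True
    have "g \<in> Th \<union> (T - {g})" using True by blast
    then obtain s' where s': "s' \<in> ctr g" "der ((Th \<union> (T - {g}) \<union> {g}) - {g}) s'"
    proof -
      have "finite (Th \<union> (T - {g}))" using fT fTh by simp
      hence "\<forall>\<sigma>\<in>Th \<union> (T - {g}). \<exists>\<sigma>'\<in>ctr \<sigma>. der ((Th \<union> (T - {g}) \<union> {g}) - {\<sigma>}) \<sigma>'"
        using cp d T(3) unfolding contrapositable_def by blast
      thus ?thesis using \<open>g \<in> Th \<union> (T - {g})\<close> that by blast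
    qed
    have "(Th \<union> (T - {g}) \<union> {g}) - {g} = (Th \<union> T) - {g}" by blast
    hence "der ((Th \<union> T) - {g}) s'" using s' by simp
    thus ?thesis using s' T unfolding af_inconsistent_def
      by (intro exI[of _ "Th \<union> T"] exI[of _ g] exI[of _ s']) auto
  qed
qed

lemma MCS_iff: "M \<in> MCS d c S \<longleftrightarrow> M \<subseteq> S \<and> af_consistent d c M \<and>
      (\<forall>X. M \<subset> X \<and> X \<subseteq> S \<longrightarrow> af_inconsistent d c X)"
  unfolding MCS_def by (rule mem_Collect_eq)

theorem corollary3:
  fixes der :: "'a set \<Rightarrow> 'a \<Rightarrow> bool" and ctr :: "'a \<Rightarrow> 'a set"
    and S :: "'a set" and \<phi> :: 'a
  assumes "fin_rel der"
    and "contrapositable der ctr"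
    and "satisfies_cut der"
    and "\<exists>\<Theta>. \<Theta> \<subseteq> \<Inter> (MCS der ctr S) \<and> der \<Theta> \<phi>"
  shows "\<Inter> (MCS der ctr S) = \<Inter> (MCS (plus_der der \<phi>) ctr S)"
proof -
  obtain Th where Th: "Th \<subseteq> \<Inter> (MCS der ctr S)" "der Th \<phi>" using assms(4) by blast
  have A: "M \<in> MCS (plus_der der \<phi>) ctr S" if M: "M \<in> MCS der ctr S" for M
  proof -
    have M1: "M \<subseteq> S" and M2: "af_consistent der ctr M"
      and M3: "\<forall>X. M \<subset> X \<and> X \<subseteq> S \<longrightarrow> af_inconsistent der ctr X"
      using M unfolding MCS_iff by blast+
    have sub: "Th \<subseteq> M" using Th(1) M by blast
    have C: "af_consistent (plus_der der \<phi>) ctr M"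
    proof
      assume "af_inconsistent (plus_der der \<phi>) ctr M"
      hence "af_inconsistent der ctr (M \<union> Th)" by (rule key[OF assms(1-3) Th(2)])
      moreover have "M \<union> Th = M" using sub by blast
      ultimately show False using M2 by simp
    qed
    have "\<forall>X. M \<subset> X \<and> X \<subseteq> S \<longrightarrow> af_inconsistent (plus_der der \<phi>) ctr X"
      using M3 incons_mono[of der ctr _ \<phi>] by blast
    thus ?thesis using M1 C unfolding MCS_iff by blast
  qed
  have B: "D \<in> MCS der ctr S" if D: "D \<in> MCS (plus_der der \<phi>) ctr S" for D
  proof -
    have D1: "D \<subseteq> S" and D2: "af_consistent (plus_der der \<phi>) ctr D"
      and D3: "\<forall>X. D \<subset> X \<and> X \<subseteq> S \<longrightarrow> af_inconsistent (plus_der der \<phi>) ctr X"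
      using D unfolding MCS_iff by blast+
    have "af_consistent der ctr D" using D2 incons_mono[of der ctr D \<phi>] by blast
    then obtain M where M: "M \<in> MCS der ctr S" "D \<subseteq> M" using extend_MCS[OF assms(1) D1] by blast
    have Mp: "M \<in> MCS (plus_der der \<phi>) ctr S" using A M(1) .
    have MS: "M \<subseteq> S" and Mc: "af_consistent (plus_der der \<phi>) ctr M"
      using Mp unfolding MCS_iff by blast+
    have "D = M"
    proof (rule ccontr)
      assume "D \<noteq> M"
      hence "D \<subset> M" using M(2) by blast
      hence "af_inconsistent (plus_der der \<phi>) ctr M" using D3 MS by blast
      thus False using Mc by blast
    qed
    thus ?thesis using M by simp
  qed
  have "MCS der ctr S = MCS (plus_der der \<phi>) ctr S" using A B by blast
  thus ?thesis by simp
qed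

end
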